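(* Let $p\in(0,1/2]$, $b=\lfloor 1/p\rfloor$ (so $b\ge2$), and $m\ge1$ an integer. Let $D_U,D_V$ be integers with $m\le D_U\le bm$, $0\le D_V\le bm$, such that $D_U-m$ is an integer multiple of $b-1$ and $D_V$ is an integer multiple of $b$. Consider $$\Phi(x,y)=\sum_{i=1}^m\bigl(1-e^{-p\,y_i}\bigr)\cdot\max\{x_i-1,0\}$$ over integer vectors $x,y\in\{0,1,\dots,b\}^m$ with $\sum_i x_i=D_U$ and $\sum_i y_i=D_V$. Then $\Phi$ has a minimizer $(x^\star,y^\star)$ over this set in which every $x^\star_i\in\{1,b\}$ and every $y^\star_i\in\{0,b\}$. *)

theory Defs
  imports Complex_Main
begin

text \<open>Vectors in {0..b}^m are represented as functions nat \<Rightarrow> int, with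
  coordinates indexed by i < m (0-based) and value 0 outside.\<close>

definition Phi :: "real \<Rightarrow> nat \<Rightarrow> (nat \<Rightarrow> int) \<Rightarrow> (nat \<Rightarrow> int) \<Rightarrow> real" where
  "Phi p m x y = (\<Sum>i<m. (1 - exp (- p * real_of_int (y i))) * max (real_of_int (x i) - 1) 0)"

definition feasible :: "nat \<Rightarrow> int \<Rightarrow> int \<Rightarrow> int \<Rightarrow> (nat \<Rightarrow> int) \<Rightarrow> (nat \<Rightarrow> int) \<Rightarrow> bool" where
  "feasible m b DU DV x y \<longleftrightarrow>
     (\<forall>i<m. 0 \<le> x i \<and> x i \<le> b \<and> 0 \<le> y i \<and> y i \<le> b) \<and>
     (\<forall>i\<ge>m. x i = 0 \<and> y i = 0) \<and>
     (\<Sum>i<m. x i) = DU \<and> (\<Sum>i<m. y i) = DV"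

end

theory Submission
  imports Defs "HOL-Analysis.Analysis"
begin

lemma conv_bound:
  fixes p b y :: real
  assumes "0 < b" "0 \<le> y" "y \<le> b"
  shows "(y / b) * (1 - exp (- p * b)) \<le> 1 - exp (- p * y)"
proof -
  define t where "t = y / b"
  have t0: "0 \<le> t" "t \<le> 1" using assms by (auto simp: t_def)
  have "exp ((1 - t) *\<^sub>R 0 + t *\<^sub>R (- p * b)) \<le> (1 - t) * exp 0 + t * exp (- p * b)"
    using convex_onD[OF exp_convex, of t 0 "- p * b"] t0 by simp
  moreover have "(1 - t) *\<^sub>R 0 + t *\<^sub>R (- p * b) = - p * y"
    using assms by (simp add: t_def)
  ultimately have "exp (- p * y) \<le> (1 - t) + t * exp (- p * b)" by (metis exp_zero mult_1_right)
  then show ?thesis by (simp add: t_def[symmetric] algebra_simps)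
qed

lemma term_bound:
  fixes p :: real and b x y :: int
  assumes "0 < p" "2 \<le> b" "0 \<le> x" "x \<le> b" "0 \<le> y" "y \<le> b"
  shows "((1 - exp (- p * b)) / b) * ((b - 1) * y + b * (x - 1) - b * (b - 1))
         \<le> (1 - exp (- p * real_of_int y)) * max (real_of_int x - 1) 0"
proof -
  define c where "c = 1 - exp (- p * b)"
  define u where "u = max (real_of_int x - 1) 0"
  have bpos: "(0::real) < b" using assms by simp
  have c0: "0 \<le> c" using assms by (simp add: c_def)
  have u0: "0 \<le> u" and u1: "u \<le> b - 1" and u2: "x - 1 \<le> u" using assms by (auto simp: u_def)
  have f: "(y / b) * c \<le> 1 - exp (- p * y)"
    using conv_bound[of "real_of_int b" "real_of_int y" p] assms by (simp add: c_def)
  have "(b - y) * (b - 1 - u) \<ge> (0::real)"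
    using assms u1 by (intro mult_nonneg_nonneg) auto
  hence yu: "y * u \<ge> (b - 1) * y + b * u - b * (b - 1)" by (simp add: algebra_simps)
  have "(b - 1) * y + b * (x - 1) - b * (b - 1) \<le> (b - 1) * y + b * u - b * (b - (1::real))"
    using u2 bpos by simp
  also have "\<dots> \<le> y * u" using yu by simp
  finally have A: "(c / b) * ((b - 1) * y + b * (x - 1) - b * (b - 1)) \<le> (c / b) * (y * u)"
    using c0 bpos by (intro mult_left_mono) auto
  have "(c / b) * (y * u) = ((y / b) * c) * u" by simp
  also have "\<dots> \<le> (1 - exp (- p * y)) * u" using f u0 by (rule mult_right_mono)
  finally have C: "(1 - exp (- p * y)) * u \<ge> (c / b) * ((b - 1) * y + b * (x - 1) - b * (b - 1))"
    using A by linarith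
  have E: "real_of_int ((b - 1) * y + b * (x - 1) - b * (b - 1))
     = (real_of_int b - 1) * real_of_int y + real_of_int b * (real_of_int x - 1) - real_of_int b * (real_of_int b - 1)"
    by simp
  show ?thesis unfolding E c_def[symmetric] u_def[symmetric] using C by simp
qed

theorem mainTheorem9:
  fixes p :: real and m :: nat and b DU DV :: int
  assumes "0 < p" and "p \<le> 1/2"
    and "b = \<lfloor>1 / p\<rfloor>"
    and "m \<ge> 1"
    and "int m \<le> DU" and "DU \<le> b * int m"
    and "0 \<le> DV" and "DV \<le> b * int m"
    and "(b - 1) dvd (DU - int m)"
    and "b dvd DV"
  shows "\<exists>xs ys. feasible m b DU DV xs ys \<and>
           (\<forall>x y. feasible m b DU DV x y \<longrightarrow> Phi p m xs ys \<le> Phi p m x y) \<and>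
           (\<forall>i<m. xs i \<in> {1, b} \<and> ys i \<in> {0, b})"
proof -
  have "2 \<le> 1 / p" using assms(1,2) by (simp add: field_simps)
  hence b2: "2 \<le> b" using assms(3) by (simp add: le_floor_iff)
  obtain k where k: "DU - int m = (b - 1) * k" using assms(9) by (auto simp: dvd_def)
  obtain l where l: "DV = b * l" using assms(10) by (auto simp: dvd_def)
  have k0: "0 \<le> k"
  proof -
    have "0 \<le> (b - 1) * k" using k assms(5) by simp
    thus ?thesis using b2 by (simp add: zero_le_mult_iff)
  qed
  have km: "k \<le> int m"
  proof -
    have "(b - 1) * k \<le> (b - 1) * int m" using k assms(6) by (simp add: algebra_simps)
    thus ?thesis using b2 by simp
  qed
  have l0: "0 \<le> l" using l assms(7) b2 by (simp add: zero_le_mult_iff)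
  have lm: "l \<le> int m" using l assms(8) b2 by simp
  define c where "c = 1 - exp (- p * b)"
  have c0: "0 \<le> c" using assms(1) b2 by (simp add: c_def)
  define xs where "xs = (\<lambda>i. if i < m then (if int i < k then b else 1) else 0::int)"
  define ys where "ys = (\<lambda>i. if i < m then (if int m - l \<le> int i then b else 0) else 0::int)"
  define S where "S = {i. i < m \<and> int i < k \<and> int m - l \<le> int i}"
  have Seq: "S = {nat (int m - l)..<nat k}"
  proof (rule set_eqI)
    fix i
    show "i \<in> S \<longleftrightarrow> i \<in> {nat (int m - l)..<nat k}"
      unfolding S_def using km lm l0 k0 by (simp, linarith)
  qed
  have cardS: "real (card S) = max 0 (of_int (k + l - int m))"
  proof -
    have "card S = nat k - nat (int m - l)" using Seq by simp
    hence "int (card S) = max 0 (k + l - int m)" using km lm l0 k0 by arith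
    hence "real_of_int (int (card S)) = real_of_int (max 0 (k + l - int m))" by simp
    thus ?thesis by (simp add: of_int_max)
  qed
  have feas: "feasible m b DU DV xs ys"
  proof -
    have s1: "(\<Sum>i<m. xs i) = (\<Sum>i<m. if int i < k then b else 1)"
      by (rule sum.cong) (auto simp: xs_def)
    have e1: "{..<m} \<inter> {i. int i < k} = {..<nat k}" using km k0 by auto
    have e2: "{..<m} \<inter> - {i. int i < k} = {nat k..<m}" using km k0 by auto
    have "(\<Sum>i<m. if int i < k then b else 1) = b * k + (int m - k)"
      using km k0 by (simp add: sum.If_cases e1 e2 of_nat_diff)
    hence sx: "(\<Sum>i<m. xs i) = DU" using s1 k by (simp add: algebra_simps)
    have s2: "(\<Sum>i<m. ys i) = (\<Sum>i<m. if int m - l \<le> int i then b else 0)"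
      by (rule sum.cong) (auto simp: ys_def)
    have e3: "{..<m} \<inter> {i. int m - l \<le> int i} = {nat (int m - l)..<m}" using lm l0 by auto
    have "(\<Sum>i<m. if int m - l \<le> int i then b else 0) = b * l"
      using lm l0 by (simp add: sum.If_cases e3)
    hence sy: "(\<Sum>i<m. ys i) = DV" using s2 l by simp
    show ?thesis unfolding feasible_def using sx sy b2 by (auto simp: xs_def ys_def)
  qed
  have PhiS: "Phi p m xs ys = c * (b - 1) * real (card S)"
  proof -
    have "Phi p m xs ys = (\<Sum>i<m. if i \<in> S then c * (b - 1) else 0)"
      unfolding Phi_def by (rule sum.cong) (use b2 in \<open>auto simp: xs_def ys_def S_def c_def\<close>)
    also have "\<dots> = (\<Sum>i\<in>{..<m} \<inter> S. c * (b - 1))" by (rule sum.inter_restrict[symmetric]) simp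
    also have "{..<m} \<inter> S = S" by (auto simp: S_def)
    finally show ?thesis by simp
  qed
  have lower: "Phi p m xs ys \<le> Phi p m x y" if fx: "feasible m b DU DV x y" for x y
  proof -
    have bnd: "\<forall>i<m. 0 \<le> x i \<and> x i \<le> b \<and> 0 \<le> y i \<and> y i \<le> b"
      and sx: "(\<Sum>i<m. x i) = DU" and sy: "(\<Sum>i<m. y i) = DV"
      using fx by (auto simp: feasible_def)
    have nn: "0 \<le> Phi p m x y" unfolding Phi_def
      using bnd assms(1) by (intro sum_nonneg mult_nonneg_nonneg) auto
    have "(c / b) * real_of_int (\<Sum>i<m. (b - 1) * y i + b * (x i - 1) - b * (b - 1))
          = (\<Sum>i<m. (c / b) * real_of_int ((b - 1) * y i + b * (x i - 1) - b * (b - 1)))"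
      by (simp add: sum_distrib_left)
    also have "\<dots> \<le> Phi p m x y" unfolding Phi_def
      by (intro sum_mono, unfold c_def, rule term_bound) (use bnd assms(1) b2 in auto)
    finally have A: "(c / b) * real_of_int (\<Sum>i<m. (b - 1) * y i + b * (x i - 1) - b * (b - 1))
          \<le> Phi p m x y" .
    have "(\<Sum>i<m. (b - 1) * y i + b * (x i - 1) - b * (b - 1))
        = (b - 1) * (\<Sum>i<m. y i) + b * (\<Sum>i<m. x i) - b * int m - int m * (b * (b - 1))"
      by (simp add: sum.distrib sum_subtractf sum_distrib_left algebra_simps)
    also have "\<dots> = b * (b - 1) * (k + l - int m)" using sx sy l arg_cong[OF k, of "\<lambda>t. b * t"] by (simp add: algebra_simps)
    finally have B: "(c / b) * real_of_int (\<Sum>i<m. (b - 1) * y i + b * (x i - 1) - b * (b - 1))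
          = c * (b - 1) * (k + l - int m)" using b2 by simp
    have "Phi p m xs ys = c * (b - 1) * max 0 (of_int (k + l - int m))" using PhiS cardS by simp
    also have "\<dots> \<le> Phi p m x y"
    proof (cases "k + l - int m \<le> 0")
      case True thus ?thesis using nn by simp
    next
      case False thus ?thesis using A B by simp
    qed
    finally show ?thesis .
  qed
  have vals: "\<forall>i<m. xs i \<in> {1, b} \<and> ys i \<in> {0, b}" by (auto simp: xs_def ys_def)
  show ?thesis using feas lower vals by blast
qed

end
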